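(* If the tree $\Upsilon$ is $\mathbb{R}$-embeddable, then there exists a bounded linear injection from $C_0(\Upsilon)$ into $c_0(\Upsilon)$. Consequently $C_0(\Upsilon)$ admits an equivalent strictly convex norm.
   Context: A tree is a partially ordered set $(\Upsilon,\preceq)$ such that for each $t$ the set $(0,t]=\{s:s\preceq t\}$ is well-ordered; let $r(t)$ be the order type of $(0,t)=\{s:s\prec t\}$. Trees are assumed Hausdorff: if $r(t)$ is a limit ordinal and $(0,t)=(0,t')$ then $t=t'$. $\Upsilon$ carries the coarsest topology in which every $(0,t]$ is open and closed, and $C_0(\Upsilon)$ is the space of continuous $f:\Upsilon\to\mathbb{R}$ with $\{|f|\ge\epsilon\}$ compact for every $\epsilon>0$, with the supremum norm. $\Upsilon$ is $\mathbb{R}$-embeddable if there is $\rho:\Upsilon\to\mathbb{R}$ with $s\prec t\Rightarrow\rho(s)<\rho(t)$. A norm is strictly convex if $\|x\|=\|y\|=\tfrac12\|x+y\|$ implies $x=y$. *)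

theory Defs
  imports "HOL-Analysis.Analysis"
begin

text \<open>A tree is modelled as a type of class order (the whole type is the tree,
  the partial order is the tree order).\<close>

definition tree_wellordered :: "'a::order itself \<Rightarrow> bool" where
  "tree_wellordered _ \<longleftrightarrow>
     (\<forall>t::'a. \<forall>S. S \<subseteq> {s. s \<le> t} \<and> S \<noteq> {} \<longrightarrow> (\<exists>m\<in>S. \<forall>x\<in>S. m \<le> x))"

text \<open>r(t), the order type of (0,t) = {s. s < t}, is a (nonzero) limit ordinal:
  (0,t) is nonempty and has no largest element.\<close>

definition limit_height :: "'a::order \<Rightarrow> bool" where
  "limit_height t \<longleftrightarrow> {s. s < t} \<noteq> {} \<and> (\<forall>s. s < t \<longrightarrow> (\<exists>u. s < u \<and> u < t))"

definition tree_hausdorff :: "'a::order itself \<Rightarrow> bool" where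
  "tree_hausdorff _ \<longleftrightarrow>
     (\<forall>t t'::'a. limit_height t \<and> {s. s < t} = {s. s < t'} \<longrightarrow> t = t')"

definition is_tree :: "'a::order itself \<Rightarrow> bool" where
  "is_tree X \<longleftrightarrow> tree_wellordered X \<and> tree_hausdorff X"

definition tree_topology :: "'a::order topology" where
  "tree_topology = topology_generated_by
     ({{s. s \<le> t} | t. True} \<union> {- {s. s \<le> t} | t. True})"

definition R_embeddable :: "'a::order itself \<Rightarrow> bool" where
  "R_embeddable _ \<longleftrightarrow> (\<exists>\<rho>::'a \<Rightarrow> real. \<forall>s t. s < t \<longrightarrow> \<rho> s < \<rho> t)"

definition C0_tree :: "('a::order \<Rightarrow> real) set" where
  "C0_tree = {f. continuous_map tree_topology euclideanreal f \<and>
       (\<forall>e>0. compactin tree_topology {x. \<bar>f x\<bar> \<ge> e})}"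

definition c0_fun :: "('a \<Rightarrow> real) set" where
  "c0_fun = {g. \<forall>e>0. finite {x. \<bar>g x\<bar> \<ge> e}}"

definition supnorm :: "('a \<Rightarrow> real) \<Rightarrow> real" where
  "supnorm f = (SUP x. \<bar>f x\<bar>)"

definition bounded_linear_injection_on ::
  "('a \<Rightarrow> real) set \<Rightarrow> ('b \<Rightarrow> real) set \<Rightarrow> (('a \<Rightarrow> real) \<Rightarrow> ('b \<Rightarrow> real)) \<Rightarrow> bool" where
  "bounded_linear_injection_on A B T \<longleftrightarrow>
     (\<forall>f\<in>A. T f \<in> B) \<and>
     (\<forall>f\<in>A. \<forall>g\<in>A. \<forall>a b. T (\<lambda>x. a * f x + b * g x) = (\<lambda>y. a * T f y + b * T g y)) \<and>
     (\<exists>M. \<forall>f\<in>A. supnorm (T f) \<le> M * supnorm f) \<and>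
     inj_on T A"

definition norm_on :: "('a \<Rightarrow> real) set \<Rightarrow> (('a \<Rightarrow> real) \<Rightarrow> real) \<Rightarrow> bool" where
  "norm_on A N \<longleftrightarrow>
     (\<forall>f\<in>A. N f \<ge> 0 \<and> (N f = 0 \<longleftrightarrow> f = (\<lambda>x. 0))) \<and>
     (\<forall>f\<in>A. \<forall>c. N (\<lambda>x. c * f x) = \<bar>c\<bar> * N f) \<and>
     (\<forall>f\<in>A. \<forall>g\<in>A. N (\<lambda>x. f x + g x) \<le> N f + N g)"

definition equivalent_to_supnorm_on :: "('a \<Rightarrow> real) set \<Rightarrow> (('a \<Rightarrow> real) \<Rightarrow> real) \<Rightarrow> bool" where
  "equivalent_to_supnorm_on A N \<longleftrightarrow>
     (\<exists>a b. 0 < a \<and> 0 < b \<and> (\<forall>f\<in>A. a * supnorm f \<le> N f \<and> N f \<le> b * supnorm f))"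

definition strictly_convex_on :: "('a \<Rightarrow> real) set \<Rightarrow> (('a \<Rightarrow> real) \<Rightarrow> real) \<Rightarrow> bool" where
  "strictly_convex_on A N \<longleftrightarrow>
     (\<forall>f\<in>A. \<forall>g\<in>A. N f = N g \<and> N g = (1/2) * N (\<lambda>x. f x + g x) \<longrightarrow> f = g)"

end

theory Submission
  imports Defs
begin


locale rtree =
  fixes \<rho> :: "'a::order \<Rightarrow> real"
  assumes wo: "tree_wellordered TYPE('a)"
    and hd: "tree_hausdorff TYPE('a)"
    and rmono: "\<And>s t. s < t \<Longrightarrow> \<rho> s < \<rho> t"
begin

lemma least_below:
  fixes t :: 'a
  assumes "S \<subseteq> {s. s \<le> t}" "S \<noteq> {}"
  shows "\<exists>m\<in>S. \<forall>x\<in>S. m \<le> x"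
proof -
  have H: "\<forall>t::'a. \<forall>S. S \<subseteq> {s. s \<le> t} \<and> S \<noteq> {} \<longrightarrow> (\<exists>m\<in>S. \<forall>x\<in>S. m \<le> x)"
    using wo unfolding tree_wellordered_def .
  have "\<forall>S. S \<subseteq> {s. s \<le> t} \<and> S \<noteq> {} \<longrightarrow> (\<exists>m\<in>S. \<forall>x\<in>S. m \<le> x)"
    by (rule spec[OF H])
  then have "S \<subseteq> {s. s \<le> t} \<and> S \<noteq> {} \<longrightarrow> (\<exists>m\<in>S. \<forall>x\<in>S. m \<le> x)"
    by (rule spec)
  with assms show ?thesis by simp
qed

lemma comparable:
  fixes x :: 'a
  assumes "a \<le> x" "b \<le> x"
  shows "a \<le> b \<or> b \<le> a"
proof -
  obtain m where "m \<in> {a,b}" "\<forall>y\<in>{a,b}. m \<le> y"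
    using least_below[of "{a,b}" x] assms by auto
  then show ?thesis by auto
qed

definition qq :: "nat \<Rightarrow> real" where "qq n = of_rat (from_nat n)"

definition PP :: "'a \<Rightarrow> nat \<Rightarrow> bool" where
  "PP t n \<longleftrightarrow> qq n \<le> \<rho> t \<and> (\<forall>s. s < t \<longrightarrow> \<rho> s < qq n)"

definition ww :: "'a \<Rightarrow> real" where
  "ww t = (if \<exists>n. PP t n then (1/2) ^ (LEAST n. PP t n) else 0)"

definition TT :: "('a \<Rightarrow> real) \<Rightarrow> ('a \<Rightarrow> real)" where
  "TT f = (\<lambda>x. ww x * f x)"

lemma rat_qq: "r \<in> \<rat> \<Longrightarrow> \<exists>n. qq n = r"
  unfolding qq_def by (metis Rats_cases from_nat_to_nat)

lemma PP_antichain: "PP s n \<Longrightarrow> PP t n \<Longrightarrow> \<not> s < t"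
  unfolding PP_def by force

lemma ww_bounds: "0 \<le> ww t" "ww t \<le> 1"
  unfolding ww_def by (auto simp: power_le_one)

lemma ww_nz: "ww t \<noteq> 0 \<longleftrightarrow> (\<exists>n. PP t n)"
  unfolding ww_def by auto

lemma ww_large:
  assumes "(1/2)^N \<le> ww t"
  shows "\<exists>n\<le>N. PP t n"
proof -
  have pos: "(1/2::real)^N > 0" by simp
  have ex: "\<exists>n. PP t n"
  proof (rule ccontr)
    assume "\<not> (\<exists>n. PP t n)"
    then have "ww t = 0" by (simp add: ww_def)
    then show False using assms pos by linarith
  qed
  let ?n = "LEAST n. PP t n"
  have "PP t ?n" using ex by (rule LeastI_ex)
  moreover have "(1/2::real)^N \<le> (1/2)^?n" using assms ex by (simp add: ww_def)
  then have "?n \<le> N" by (simp add: power_decreasing_iff)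
  ultimately show ?thesis by blast
qed

lemma open_down: "openin tree_topology {s. s \<le> x}"
  unfolding tree_topology_def openin_topology_generated_by_iff
  by (rule generate_topology_on.Basis) blast

lemma antichain_compact_finite:
  fixes K :: "'a set"
  assumes K: "compactin tree_topology K" and D: "\<And>s t. s \<in> D \<Longrightarrow> t \<in> D \<Longrightarrow> \<not> s < t"
  shows "finite (K \<inter> D)"
proof -
  let ?U = "(\<lambda>x. {s. s \<le> x}) ` K"
  have "\<forall>U\<in>?U. openin tree_topology U" using open_down by auto
  moreover have "K \<subseteq> \<Union>?U" by auto
  ultimately obtain F where F: "finite F" "F \<subseteq> ?U" "K \<subseteq> \<Union>F"
    using K unfolding compactin_def by meson
  have sub: "finite (B \<inter> D)" if "B \<in> F" for B
  proof -
    obtain x where B: "B = {s. s \<le> x}" using \<open>B \<in> F\<close> F(2) by auto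
    have "B \<inter> D \<subseteq> {a}" if "a \<in> B \<inter> D" for a
    proof
      fix b assume "b \<in> B \<inter> D"
      then show "b \<in> {a}" using comparable[of a x b] that B D[of a b] D[of b a]
        by (auto simp: order.order_iff_strict)
    qed
    then show ?thesis
    proof (cases "B \<inter> D = {}")
      case False
      then obtain a where "a \<in> B \<inter> D" by blast
      then show ?thesis using finite_subset[of "B \<inter> D" "{a}"] \<open>\<And>a. a \<in> B \<inter> D \<Longrightarrow> B \<inter> D \<subseteq> {a}\<close> by blast
    qed simp
  qed
  have "K \<inter> D \<subseteq> \<Union>((\<lambda>B. B \<inter> D) ` F)" using F(3) by auto
  moreover have "finite (\<Union>((\<lambda>B. B \<inter> D) ` F))" by (rule finite_UN_I[OF F(1) sub])
  ultimately show ?thesis by (rule finite_subset)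
qed

lemma noP_below:
  assumes "\<not> (\<exists>n. PP t n)"
  shows "\<exists>s. s < t"
proof (rule ccontr)
  assume a: "\<not> (\<exists>s. s < t)"
  obtain r where "r \<in> \<rat>" "\<rho> t - 1 < r" "r < \<rho> t" using Rats_dense_in_real[of "\<rho> t - 1" "\<rho> t"] by auto
  then obtain n where "qq n = r" using rat_qq by blast
  then have "PP t n" using a \<open>r < \<rho> t\<close> unfolding PP_def by auto
  then show False using assms by blast
qed

lemma noP_between:
  assumes "\<not> (\<exists>n. PP t n)" "s < t"
  shows "\<exists>u. s < u \<and> u < t \<and> (\<exists>n. PP u n)"
proof -
  obtain r where "r \<in> \<rat>" "\<rho> s < r" "r < \<rho> t" using Rats_dense_in_real rmono[OF assms(2)] by blast
  then obtain n where qn: "qq n = r" using rat_qq by blast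
  let ?S = "{v. v \<le> t \<and> r \<le> \<rho> v}"
  have "t \<in> ?S" using \<open>r < \<rho> t\<close> by simp
  moreover have "?S \<subseteq> {s. s \<le> t}" by blast
  ultimately obtain u where u: "u \<in> ?S" "\<forall>v\<in>?S. u \<le> v"
    using least_below[of ?S t] by blast
  have "PP u n" unfolding PP_def qn
  proof (intro conjI allI impI)
    show "r \<le> \<rho> u" using u by auto
    fix v assume "v < u"
    show "\<rho> v < r"
    proof (rule ccontr)
      assume "\<not> \<rho> v < r"
      then have "v \<in> ?S" using \<open>v < u\<close> u(1) by auto
      then have "u \<le> v" using u(2) by blast
      with \<open>v < u\<close> have "v < v" by (rule order.strict_trans2)
      then show False by simp
    qed
  qed
  then have "u \<noteq> t" using assms(1) by blast
  then have "u < t" using u by auto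
  moreover have "s < u"
  proof (rule ccontr)
    assume "\<not> s < u"
    moreover have "s \<le> u \<or> u \<le> s" using comparable[of s t u] \<open>u < t\<close> assms(2) by auto
    ultimately have "u \<le> s" by (auto simp: order.order_iff_strict)
    then have "u = s \<or> u < s" by (auto simp: order.order_iff_strict)
    then have "\<rho> u \<le> \<rho> s" using rmono[of u s] by auto
    then show False using u(1) \<open>\<rho> s < r\<close> by auto
  qed
  ultimately show ?thesis using \<open>PP u n\<close> by blast
qed

lemma noP_limit:
  assumes "\<not> (\<exists>n. PP t n)"
  shows "limit_height t"
proof -
  have "{s. s < t} \<noteq> {}" using noP_below[OF assms] by auto
  moreover have "\<forall>s. s < t \<longrightarrow> (\<exists>u. s < u \<and> u < t)"
  proof (intro allI impI)
    fix s assume "s < t"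
    then obtain u where "s < u \<and> u < t" using noP_between[OF assms] by blast
    then show "\<exists>u. s < u \<and> u < t" by blast
  qed
  ultimately show ?thesis unfolding limit_height_def by blast
qed

lemma noP_open:
  assumes "\<not> (\<exists>n. PP t n)" "openin tree_topology U" "t \<in> U"
  shows "\<exists>s<t. \<forall>u. s < u \<and> u \<le> t \<longrightarrow> u \<in> U"
proof -
  have "generate_topology_on ({{s. s \<le> t} | t. True} \<union> {- {s. s \<le> t} | t. True}) U"
    using assms(2) unfolding tree_topology_def openin_topology_generated_by_iff .
  then show ?thesis using assms(3)
  proof (induction rule: generate_topology_on.induct)
    case Empty then show ?case by simp
  next
    case (Int a b)
    then obtain s1 s2 where s: "s1 < t" "\<forall>u. s1 < u \<and> u \<le> t \<longrightarrow> u \<in> a"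
        "s2 < t" "\<forall>u. s2 < u \<and> u \<le> t \<longrightarrow> u \<in> b" by auto
    have "s1 \<le> s2 \<or> s2 \<le> s1" using comparable[of s1 t s2] s by auto
    then show ?case
    proof
      assume "s1 \<le> s2" then show ?case using s by (intro exI[of _ s2]) auto
    next
      assume "s2 \<le> s1" then show ?case using s by (intro exI[of _ s1]) auto
    qed
  next
    case (UN K)
    then obtain k where "k \<in> K" "t \<in> k" by auto
    then show ?case using UN.IH[of k] by blast
  next
    case (Basis B)
    obtain s0 where s0: "s0 < t" using noP_below[OF assms(1)] by blast
    from Basis(1) obtain a where "B = {s. s \<le> a} \<or> B = - {s. s \<le> a}" by blast
    then show ?case
    proof
      assume "B = {s. s \<le> a}"
      then show ?case using Basis(2) s0 by (intro exI[of _ s0]) auto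
    next
      assume B: "B = - {s. s \<le> a}"
      then have nta: "\<not> t \<le> a" using Basis(2) by auto
      show ?case
      proof (cases "\<exists>s<t. \<not> s \<le> a")
        case True
        then obtain s where "s < t" "\<not> s \<le> a" by blast
        moreover have "\<forall>u. s < u \<and> u \<le> t \<longrightarrow> u \<in> B"
        proof (intro allI impI)
          fix u assume "s < u \<and> u \<le> t"
          then have su: "s \<le> u" using order.strict_implies_order by blast
          have "\<not> u \<le> a"
          proof
            assume "u \<le> a"
            with su have "s \<le> a" by (rule order_trans)
            then show False using \<open>\<not> s \<le> a\<close> by simp
          qed
          then show "u \<in> B" using B by simp
        qed
        ultimately show ?thesis by blast
      next
        case False
        then have all: "\<forall>s<t. s \<le> a" by blast
        have nat: "\<not> a < t"
        proof
          assume "a < t"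
          then obtain u where "a < u" "u < t" using noP_between[OF assms(1)] by blast
          then have "u \<le> a" using all by blast
          with \<open>a < u\<close> have "a < a" by (rule order.strict_trans2)
          then show False by simp
        qed
        let ?S = "{v. v \<le> a \<and> \<not> v < t}"
        have "a \<in> ?S" using nat by simp
        moreover have "?S \<subseteq> {s. s \<le> a}" by blast
        ultimately obtain t' where t': "t' \<in> ?S" "\<forall>v\<in>?S. t' \<le> v"
          using least_below[of ?S a] by blast
        have "{s. s < t'} = {s. s < t}"
        proof (intro set_eqI iffI; simp)
          fix s assume "s < t'"
          show "s < t"
          proof (rule ccontr)
            assume "\<not> s < t"
            then have "s \<in> ?S" using \<open>s < t'\<close> t'(1) by auto
            then have "t' \<le> s" using t'(2) by blast
            with \<open>s < t'\<close> have "s < s" by (rule order.strict_trans2)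
            then show False by simp
          qed
        next
          fix s assume "s < t"
          then have "s \<le> a" using all by blast
          then have "s \<le> t' \<or> t' \<le> s" using comparable[of s a t'] t'(1) by auto
          moreover have "\<not> t' \<le> s" using t'(1) \<open>s < t\<close> by (metis (mono_tags) mem_Collect_eq order_le_less_trans)
          moreover have "s \<noteq> t'" using t'(1) \<open>s < t\<close> by auto
          ultimately show "s < t'" by auto
        qed
        moreover have "\<forall>t t'::'a. limit_height t \<and> {s. s < t} = {s. s < t'} \<longrightarrow> t = t'"
          using hd by (simp add: tree_hausdorff_def)
        ultimately have "t = t'" using noP_limit[OF assms(1)] by blast
        then show ?thesis using t'(1) nta by auto
      qed
    qed
  qed
qed

lemma vanish:
  assumes h: "continuous_map tree_topology euclideanreal h"
    and z: "\<And>t. (\<exists>n. PP t n) \<Longrightarrow> h t = 0"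
  shows "h t = 0"
proof (rule ccontr)
  assume ht: "h t \<noteq> 0"
  then have nP: "\<not> (\<exists>n. PP t n)" using z by blast
  let ?U = "{x \<in> topspace tree_topology. h x \<in> ball (h t) \<bar>h t\<bar>}"
  have "openin tree_topology ?U" by (rule openin_continuous_map_preimage[OF h]) simp
  moreover have "t \<in> topspace tree_topology" using open_down[of t] openin_subset by blast
  then have "t \<in> ?U" using ht by auto
  ultimately obtain s where s: "s < t" "\<forall>u. s < u \<and> u \<le> t \<longrightarrow> u \<in> ?U"
    using noP_open[OF nP] by blast
  obtain u where u: "s < u" "u < t" "\<exists>n. PP u n" using noP_between[OF nP \<open>s < t\<close>] by blast
  have "u \<in> ?U" using s(2) u(1,2) by (simp add: order.strict_implies_order)
  moreover have "h u = 0" using z u(3) by blast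
  ultimately show False by (simp add: dist_real_def)
qed

end


definition Fam :: "nat \<Rightarrow> 'b set set" where
  "Fam k = {F. finite F \<and> card F \<le> k}"

definition QQ :: "nat \<Rightarrow> ('b \<Rightarrow> real) \<Rightarrow> real" where
  "QQ k x = (SUP F\<in>Fam k. L2_set x F)"

lemma empty_Fam: "{} \<in> Fam k" by (simp add: Fam_def)

lemma c0_fin: "x \<in> c0_fun \<Longrightarrow> e > 0 \<Longrightarrow> finite {g. \<bar>x g\<bar> \<ge> e}"
  by (simp add: c0_fun_def)

lemma c0_add:
  assumes "x \<in> c0_fun" "y \<in> c0_fun"
  shows "(\<lambda>g. x g + y g) \<in> c0_fun"
  unfolding c0_fun_def
proof (intro CollectI allI impI)
  fix e :: real assume "e > 0"
  have "{g. \<bar>x g + y g\<bar> \<ge> e} \<subseteq> {g. \<bar>x g\<bar> \<ge> e/2} \<union> {g. \<bar>y g\<bar> \<ge> e/2}" by auto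
  moreover have "finite {g. \<bar>x g\<bar> \<ge> e/2}" "finite {g. \<bar>y g\<bar> \<ge> e/2}"
    using c0_fin[OF assms(1), of "e/2"] c0_fin[OF assms(2), of "e/2"] \<open>e > 0\<close> by auto
  ultimately show "finite {g. \<bar>x g + y g\<bar> \<ge> e}" by (meson finite_Un finite_subset)
qed

lemma c0_scale:
  assumes "x \<in> c0_fun"
  shows "(\<lambda>g. c * x g) \<in> c0_fun"
  unfolding c0_fun_def
proof (intro CollectI allI impI)
  fix e :: real assume "e > 0"
  show "finite {g. \<bar>c * x g\<bar> \<ge> e}"
  proof (cases "c = 0")
    case True then show ?thesis using \<open>e > 0\<close> by simp
  next
    case False
    have "{g. \<bar>c * x g\<bar> \<ge> e} = {g. \<bar>x g\<bar> \<ge> e / \<bar>c\<bar>}"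
      using False by (auto simp: abs_mult field_simps)
    moreover have "finite {g. \<bar>x g\<bar> \<ge> e / \<bar>c\<bar>}" using c0_fin[OF assms, of "e / \<bar>c\<bar>"] \<open>e > 0\<close> False by auto
    ultimately show ?thesis by simp
  qed
qed

lemma L2_sq: "finite F \<Longrightarrow> (L2_set x F)^2 = (\<Sum>g\<in>F. (x g)^2)"
  unfolding L2_set_def by (simp add: sum_nonneg)

lemma L2_le_iff: "finite F \<Longrightarrow> finite G \<Longrightarrow> L2_set x F \<le> L2_set x G \<longleftrightarrow> (\<Sum>g\<in>F. (x g)^2) \<le> (\<Sum>g\<in>G. (x g)^2)"
  unfolding L2_set_def by simp

lemma reduce_finite:
  fixes x :: "'a \<Rightarrow> real"
  assumes "x \<in> c0_fun"
  shows "\<exists>S. finite S \<and> (\<forall>G\<in>Fam k. \<exists>G'\<in>Fam k. G' \<subseteq> S \<and> L2_set x G \<le> L2_set x G')"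
proof (cases "finite {g. x g \<noteq> 0}")
  case True
  let ?Z = "{g. x g \<noteq> 0}"
  show ?thesis
  proof (intro exI[of _ ?Z] conjI ballI)
    show "finite ?Z" by fact
    fix G :: "'a set" assume G: "G \<in> Fam k"
    then have fG: "finite G" by (simp add: Fam_def)
    have "G \<inter> ?Z \<in> Fam k" using G by (auto simp: Fam_def intro: card_mono order_trans)
    moreover have "L2_set x G = L2_set x (G \<inter> ?Z)"
      unfolding L2_set_def by (rule arg_cong[where f=sqrt], rule sum.mono_neutral_right) (use fG in auto)
    ultimately show "\<exists>G'\<in>Fam k. G' \<subseteq> ?Z \<and> L2_set x G \<le> L2_set x G'"
      by (intro bexI[where x="G \<inter> ?Z"]) auto
  qed
next
  case False
  show ?thesis
  proof (cases "k = 0")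
    case True
    then have "\<forall>G\<in>Fam k. G = {}" by (auto simp: Fam_def)
    then show ?thesis using empty_Fam[of k] by (intro exI[of _ "{}"]) auto
  next
    case k0: False
    obtain E where E: "finite E" "card E = k" "E \<subseteq> {g. x g \<noteq> 0}"
      using infinite_arbitrarily_large[OF False] by blast
    have Ene: "E \<noteq> {}" using E k0 by auto
    define e where "e = Min ((\<lambda>g. \<bar>x g\<bar>) ` E)"
    have epos: "e > 0" unfolding e_def using E Ene by (subst Min_gr_iff) auto
    let ?S = "{g. \<bar>x g\<bar> \<ge> e}"
    have fS: "finite ?S" using c0_fin[OF assms epos] by simp
    have ES: "E \<subseteq> ?S" unfolding e_def using E by auto
    have cS: "k \<le> card ?S" using card_mono[OF fS ES] E by simp
    show ?thesis
    proof (intro exI[of _ ?S] conjI ballI)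
      show "finite ?S" by fact
      fix G :: "'a set" assume G: "G \<in> Fam k"
      then have fG: "finite G" and cG: "card G \<le> k" by (auto simp: Fam_def)
      have c1: "card (G - ?S) \<le> card (?S - G)"
      proof -
        have "card (?S - G) = card ?S - card (?S \<inter> G)" using fS fG
          by (metis card_Diff_subset_Int Diff_Int2 Int_commute finite_Int inf_left_idem)
        moreover have "card (G - ?S) = card G - card (G \<inter> ?S)" using fS fG
          by (metis card_Diff_subset_Int Diff_Int2 finite_Int inf_left_idem)
        moreover have "card (G \<inter> ?S) \<le> card G" using fG by (simp add: card_mono)
        moreover have "card G \<le> card ?S" using cS cG by linarith
        ultimately show ?thesis by (simp add: Int_commute diff_le_mono)
      qed
      obtain H where H: "H \<subseteq> ?S - G" "card H = card (G - ?S)" "finite H"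
        using obtain_subset_with_card_n[OF c1] by blast
      let ?G' = "(G \<inter> ?S) \<union> H"
      have disj: "(G \<inter> ?S) \<inter> H = {}" using H by auto
      have fG': "finite ?G'" using fG H by auto
      have "card ?G' = card (G \<inter> ?S) + card H" using disj fG H by (simp add: card_Un_disjoint)
      also have "\<dots> = card (G \<inter> ?S) + card (G - ?S)" using H by simp
      also have "\<dots> = card G" using fG by (metis card_Int_Diff)
      finally have "?G' \<in> Fam k" using fG' cG by (simp add: Fam_def)
      moreover have "?G' \<subseteq> ?S" using H by auto
      moreover have "L2_set x G \<le> L2_set x ?G'"
      proof -
        have s1: "(\<Sum>g\<in>G. (x g)^2) = (\<Sum>g\<in>G \<inter> ?S. (x g)^2) + (\<Sum>g\<in>G - ?S. (x g)^2)"
          using fG by (metis sum.Int_Diff)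
        have s2: "(\<Sum>g\<in>?G'. (x g)^2) = (\<Sum>g\<in>G \<inter> ?S. (x g)^2) + (\<Sum>g\<in>H. (x g)^2)"
          using disj fG H by (simp add: sum.union_disjoint)
        have "(\<Sum>g\<in>G - ?S. (x g)^2) \<le> (\<Sum>g\<in>G - ?S. e^2)"
        proof (rule sum_mono)
          fix g assume "g \<in> G - ?S"
          then have "\<bar>x g\<bar> \<le> e" by auto
          then show "(x g)^2 \<le> e^2" by (metis abs_ge_zero power2_abs power_mono)
        qed
        also have "\<dots> = (\<Sum>g\<in>H. e^2)" using H by simp
        also have "\<dots> \<le> (\<Sum>g\<in>H. (x g)^2)"
        proof (rule sum_mono)
          fix g assume "g \<in> H"
          then have "e \<le> \<bar>x g\<bar>" using H by auto
          then show "e^2 \<le> (x g)^2" using epos by (metis power2_abs power_mono less_imp_le)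
        qed
        finally have "(\<Sum>g\<in>G. (x g)^2) \<le> (\<Sum>g\<in>?G'. (x g)^2)" using s1 s2 by linarith
        then show ?thesis using L2_le_iff[OF fG fG', of x] by blast
      qed
      ultimately show "\<exists>G'\<in>Fam k. G' \<subseteq> ?S \<and> L2_set x G \<le> L2_set x G'" by blast
    qed
  qed
qed

lemma attain:
  fixes x :: "'a \<Rightarrow> real"
  assumes "x \<in> c0_fun"
  shows "\<exists>F\<in>Fam k. \<forall>G\<in>Fam k. L2_set x G \<le> L2_set x F"
proof -
  obtain S :: "'a set" where S: "finite S" "\<forall>G\<in>Fam k. \<exists>G'\<in>Fam k. G' \<subseteq> S \<and> L2_set x G \<le> L2_set x G'"
    using reduce_finite[OF assms, where k=k] by (elim exE conjE)
  let ?A = "{G\<in>Fam k. G \<subseteq> S}"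
  have fA: "finite ?A" using S(1) by (rule finite_subset[rotated, OF finite_Pow_iff[THEN iffD2]]) auto
  have neA: "?A \<noteq> {}" using empty_Fam[of k] by auto
  let ?M = "Max (L2_set x ` ?A)"
  have "?M \<in> L2_set x ` ?A" using fA neA by (intro Max_in) auto
  then obtain F where F: "F \<in> ?A" "L2_set x F = ?M" by auto
  show ?thesis
  proof (intro bexI[of _ F] ballI)
    fix G :: "'a set" assume "G \<in> Fam k"
    then obtain G' where "G' \<in> ?A" "L2_set x G \<le> L2_set x G'" using S(2) by blast
    moreover have "L2_set x G' \<le> ?M" using fA \<open>G' \<in> ?A\<close> by (intro Max_ge) auto
    ultimately show "L2_set x G \<le> L2_set x F" using F by linarith
  qed (use F in auto)
qed

lemma QQ_eq:
  assumes "F \<in> Fam k" "\<forall>G\<in>Fam k. L2_set x G \<le> L2_set x F"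
  shows "QQ k x = L2_set x F"
  unfolding QQ_def using assms by (intro cSup_eq_maximum) auto

lemma QQ_ge:
  assumes "x \<in> c0_fun" "G \<in> Fam k"
  shows "L2_set x G \<le> QQ k x"
  using attain[OF assms(1), of k] QQ_eq assms(2) by fastforce

lemma QQ_nonneg: "x \<in> c0_fun \<Longrightarrow> 0 \<le> QQ k x"
proof -
  assume "x \<in> c0_fun"
  have "L2_set x {} \<le> QQ k x" by (rule QQ_ge[OF \<open>x \<in> c0_fun\<close> empty_Fam])
  then show ?thesis by simp
qed

lemma QQ_triangle:
  assumes "x \<in> c0_fun" "y \<in> c0_fun"
  shows "QQ k (\<lambda>g. x g + y g) \<le> QQ k x + QQ k y"
proof -
  obtain F where F: "F \<in> Fam k" "\<forall>G\<in>Fam k. L2_set (\<lambda>g. x g + y g) G \<le> L2_set (\<lambda>g. x g + y g) F"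
    using attain[OF c0_add[OF assms]] by blast
  have "QQ k (\<lambda>g. x g + y g) = L2_set (\<lambda>g. x g + y g) F" by (rule QQ_eq[OF F])
  also have "\<dots> \<le> L2_set x F + L2_set y F" by (rule L2_set_triangle_ineq)
  also have "\<dots> \<le> QQ k x + QQ k y" using QQ_ge[OF assms(1) F(1)] QQ_ge[OF assms(2) F(1)] by linarith
  finally show ?thesis .
qed

lemma L2_scale: "L2_set (\<lambda>g. c * x g) F = \<bar>c\<bar> * L2_set x F"
proof -
  have "L2_set (\<lambda>g. c * x g) F = L2_set (\<lambda>g. \<bar>c\<bar> * x g) F"
    unfolding L2_set_def by (simp add: power_mult_distrib)
  also have "\<dots> = \<bar>c\<bar> * L2_set x F" by (simp add: L2_set_right_distrib)
  finally show ?thesis .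
qed

lemma QQ_scale:
  assumes "x \<in> c0_fun"
  shows "QQ k (\<lambda>g. c * x g) = \<bar>c\<bar> * QQ k x"
proof -
  obtain F where F: "F \<in> Fam k" "\<forall>G\<in>Fam k. L2_set x G \<le> L2_set x F"
    using attain[OF assms] by blast
  have F': "\<forall>G\<in>Fam k. L2_set (\<lambda>g. c * x g) G \<le> L2_set (\<lambda>g. c * x g) F"
    using F(2) by (simp add: L2_scale mult_left_mono)
  show ?thesis using QQ_eq[OF F(1) F'] QQ_eq[OF F] by (simp add: L2_scale)
qed

lemma QQ_bound:
  assumes "x \<in> c0_fun" "\<And>g. \<bar>x g\<bar> \<le> B"
  shows "(QQ k x)^2 \<le> real k * B^2"
proof -
  obtain F where F: "F \<in> Fam k" "\<forall>G\<in>Fam k. L2_set x G \<le> L2_set x F"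
    using attain[OF assms(1)] by blast
  have fF: "finite F" "card F \<le> k" using F(1) by (auto simp: Fam_def)
  have "(QQ k x)^2 = (\<Sum>g\<in>F. (x g)^2)" using QQ_eq[OF F] L2_sq[OF fF(1)] by simp
  also have "\<dots> \<le> (\<Sum>g\<in>F. B^2)"
    by (rule sum_mono) (metis abs_ge_zero assms(2) power2_abs power_mono)
  also have "\<dots> = real (card F) * B^2" by simp
  also have "\<dots> \<le> real k * B^2" using fF(2) by (intro mult_right_mono) auto
  finally show ?thesis .
qed

lemma QQ_zero_k: "QQ 0 (x::'a \<Rightarrow> real) = 0"
proof -
  have "Fam 0 = {{}::'a set}" by (auto simp: Fam_def)
  then show ?thesis unfolding QQ_def by simp
qed

lemma parallelogram:
  assumes "finite F" "L2_set x F = L2_set y F"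
    "L2_set (\<lambda>g. x g + y g) F = L2_set x F + L2_set y F"
  shows "\<forall>g\<in>F. x g = y g"
proof -
  let ?a = "L2_set x F"
  have sx: "(\<Sum>g\<in>F. (x g)^2) = ?a^2" using L2_sq[OF assms(1)] by simp
  have sy: "(\<Sum>g\<in>F. (y g)^2) = ?a^2" using L2_sq[OF assms(1), of y] assms(2) by simp
  have sz: "(\<Sum>g\<in>F. (x g + y g)^2) = (2*?a)^2" using L2_sq[OF assms(1), of "\<lambda>g. x g + y g"] assms(2,3) by simp
  have "(\<Sum>g\<in>F. (x g - y g)^2) = (\<Sum>g\<in>F. 2*(x g)^2 + 2*(y g)^2 - (x g + y g)^2)"
    by (rule sum.cong) (auto simp: power2_eq_square algebra_simps)
  also have "\<dots> = 2 * (\<Sum>g\<in>F. (x g)^2) + 2 * (\<Sum>g\<in>F. (y g)^2) - (\<Sum>g\<in>F. (x g + y g)^2)"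
    by (simp add: sum_subtractf sum.distrib sum_distrib_left)
  also have "\<dots> = 0" using sx sy sz by (simp add: power2_eq_square)
  finally have "\<forall>g\<in>F. (x g - y g)^2 = 0" using assms(1) by (subst (asm) sum_nonneg_eq_0_iff) auto
  then show ?thesis by simp
qed

lemma member_max:
  assumes x: "x \<in> c0_fun" and xg: "x g \<noteq> 0"
    and k: "k = card {d. \<bar>x d\<bar> \<ge> \<bar>x g\<bar>}"
    and F: "F \<in> Fam k" "\<forall>G\<in>Fam k. L2_set x G \<le> L2_set x F"
  shows "g \<in> F"
proof (rule ccontr)
  assume gF: "g \<notin> F"
  let ?A = "{d. \<bar>x d\<bar> \<ge> \<bar>x g\<bar>}"
  have fA: "finite ?A" using c0_fin[OF x, of "\<bar>x g\<bar>"] xg by simp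
  have gA: "g \<in> ?A" by simp
  have fF: "finite F" "card F \<le> k" using F(1) by (auto simp: Fam_def)
  have pos: "(x g)^2 > 0" using xg by simp
  show False
  proof (cases "card F < k")
    case True
    let ?G = "insert g F"
    have "?G \<in> Fam k" using True fF gF by (simp add: Fam_def)
    then have "L2_set x ?G \<le> L2_set x F" using F(2) by blast
    moreover have "(\<Sum>d\<in>?G. (x d)^2) = (x g)^2 + (\<Sum>d\<in>F. (x d)^2)" using fF gF by simp
    ultimately show False using L2_le_iff[of ?G F x] fF pos by simp
  next
    case False
    then have cF: "card F = k" using fF by simp
    have "\<not> F \<subseteq> ?A - {g}"
    proof
      assume "F \<subseteq> ?A - {g}"
      then have "card F \<le> card (?A - {g})" using fA by (intro card_mono) auto
      also have "\<dots> < card ?A" by (rule card_Diff1_less[OF fA gA])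
      finally show False using cF k by simp
    qed
    then obtain d where d0: "d \<in> F" "d \<notin> ?A - {g}" by blast
    then have d: "d \<in> F" "\<bar>x d\<bar> < \<bar>x g\<bar>" using gF by (auto simp: not_le)
    let ?G = "insert g (F - {d})"
    have cG: "card ?G = card F" using fF d gF by (simp add: card_Diff1_less) (metis One_nat_def Suc_pred card_gt_0_iff empty_iff)
    then have "?G \<in> Fam k" using fF by (simp add: Fam_def)
    then have "L2_set x ?G \<le> L2_set x F" using F(2) by blast
    moreover have "(\<Sum>e\<in>?G. (x e)^2) = (x g)^2 + (\<Sum>e\<in>F. (x e)^2) - (x d)^2"
      using fF gF d by (simp add: sum_diff1)
    moreover have "(x d)^2 < (x g)^2" using d(2) by (metis abs_ge_zero power2_abs power_strict_mono zero_less_numeral)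
    ultimately show False using L2_le_iff[of ?G F x] fF by simp
  qed
qed

lemma key_one:
  assumes x: "x \<in> c0_fun" and y: "y \<in> c0_fun"
    and eq: "\<And>k. k > 0 \<Longrightarrow> QQ k x = QQ k y"
    and add: "\<And>k. k > 0 \<Longrightarrow> QQ k (\<lambda>g. x g + y g) = QQ k x + QQ k y"
    and xg: "x g \<noteq> 0"
  shows "x g = y g"
proof -
  define k where "k = card {d. \<bar>x d\<bar> \<ge> \<bar>x g\<bar>}"
  have fA: "finite {d. \<bar>x d\<bar> \<ge> \<bar>x g\<bar>}" using c0_fin[OF x, of "\<bar>x g\<bar>"] xg by simp
  then have "k > 0" unfolding k_def by (subst card_gt_0_iff) auto
  let ?z = "\<lambda>g. x g + y g"
  obtain F where F: "F \<in> Fam k" "\<forall>G\<in>Fam k. L2_set ?z G \<le> L2_set ?z F"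
    using attain[OF c0_add[OF x y]] by blast
  have fF: "finite F" using F(1) by (simp add: Fam_def)
  have "L2_set ?z F = QQ k x + QQ k y" using QQ_eq[OF F] add[OF \<open>k > 0\<close>] by simp
  moreover have "L2_set ?z F \<le> L2_set x F + L2_set y F" by (rule L2_set_triangle_ineq)
  moreover have "L2_set x F \<le> QQ k x" "L2_set y F \<le> QQ k y" using QQ_ge x y F(1) by auto
  ultimately have ex: "L2_set x F = QQ k x" and ey: "L2_set y F = QQ k y"
    and ez: "L2_set ?z F = L2_set x F + L2_set y F" by linarith+
  have "\<forall>h\<in>F. x h = y h" using parallelogram[OF fF _ ez] ex ey eq[OF \<open>k > 0\<close>] by simp
  moreover have "\<forall>G\<in>Fam k. L2_set x G \<le> L2_set x F" using ex QQ_ge[OF x] by simp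
  then have "g \<in> F" using member_max[OF x xg k_def F(1)] by blast
  ultimately show ?thesis by blast
qed

lemma key:
  assumes x: "x \<in> c0_fun" and y: "y \<in> c0_fun"
    and eq: "\<And>k. k > 0 \<Longrightarrow> QQ k x = QQ k y"
    and add: "\<And>k. k > 0 \<Longrightarrow> QQ k (\<lambda>g. x g + y g) = QQ k x + QQ k y"
  shows "x = y"
proof
  fix g
  show "x g = y g"
  proof (cases "x g = 0")
    case False then show ?thesis using key_one[OF x y eq add] by blast
  next
    case True
    show ?thesis
    proof (cases "y g = 0")
      case True then show ?thesis using \<open>x g = 0\<close> by simp
    next
      case False
      have add': "\<And>k. k > 0 \<Longrightarrow> QQ k (\<lambda>g. y g + x g) = QQ k y + QQ k x"
        using add eq by (simp add: add.commute)
      have "y g = x g" using key_one[OF y x _ add' False] eq by metis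
      then show ?thesis by simp
    qed
  qed
qed



lemma sq_sum_le: "(a+b)^2 \<le> 2*a^2 + 2*(b::real)^2"
proof -
  have "2*a^2+2*b^2 - (a+b)^2 = (a-b)^2" by (simp add: power2_eq_square algebra_simps)
  moreover have "(a-b)^2 \<ge> 0" by simp
  ultimately show ?thesis by linarith
qed

lemma sq_diff_le: "(a-b)^2 \<le> 2*a^2 + 2*(b::real)^2"
proof -
  have "2*a^2+2*b^2 - (a-b)^2 = (a+b)^2" by (simp add: power2_eq_square algebra_simps)
  moreover have "(a+b)^2 \<ge> 0" by simp
  ultimately show ?thesis by linarith
qed

lemma sq_le_2: "0 \<le> s \<Longrightarrow> s \<le> a + b \<Longrightarrow> 0 \<le> a \<Longrightarrow> 0 \<le> b \<Longrightarrow> (s::real)^2 \<le> 2*a^2 + 2*b^2"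
proof -
  assume h: "0 \<le> s" "s \<le> a + b" "0 \<le> a" "0 \<le> b"
  have "s^2 \<le> (a+b)^2" using h by (intro power_mono) auto
  also have "\<dots> \<le> 2*a^2 + 2*b^2" by (rule sq_sum_le)
  finally show ?thesis .
qed

lemma mink:
  fixes a b s :: "nat \<Rightarrow> real"
  assumes s0: "\<And>j. 0 \<le> s j" and sab: "\<And>j. s j \<le> a j + b j" and a0: "\<And>j. 0 \<le> a j" and b0: "\<And>j. 0 \<le> b j"
    and sa: "summable (\<lambda>j. (a j)^2)" and sb: "summable (\<lambda>j. (b j)^2)"
  shows "summable (\<lambda>j. (s j)^2)" "sqrt (\<Sum>j. (s j)^2) \<le> sqrt (\<Sum>j. (a j)^2) + sqrt (\<Sum>j. (b j)^2)"
proof -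
  have le: "(s j)^2 \<le> 2*(a j)^2 + 2*(b j)^2" for j using sq_le_2[OF s0 sab a0 b0] .
  have s2: "summable (\<lambda>j. 2*(a j)^2 + 2*(b j)^2)" using sa sb by (intro summable_add summable_mult)
  show ss: "summable (\<lambda>j. (s j)^2)"
    by (rule summable_comparison_test'[OF s2]) (use le in simp)
  let ?A = "\<Sum>j. (a j)^2" and ?B = "\<Sum>j. (b j)^2"
  have "(\<Sum>j<n. (s j)^2) \<le> (sqrt ?A + sqrt ?B)^2" for n
  proof -
    have "(\<Sum>j<n. (s j)^2) \<le> (\<Sum>j<n. (a j + b j)^2)"
      by (rule sum_mono) (use s0 sab in \<open>intro power_mono; auto\<close>)
    also have "\<dots> = (L2_set (\<lambda>j. a j + b j) {..<n})^2" by (simp add: L2_sq)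
    also have "\<dots> \<le> (L2_set a {..<n} + L2_set b {..<n})^2"
      by (intro power_mono L2_set_triangle_ineq) auto
    also have "\<dots> \<le> (sqrt ?A + sqrt ?B)^2"
    proof -
      have "L2_set a {..<n} \<le> sqrt ?A" unfolding L2_set_def
        by (intro real_sqrt_le_mono sum_le_suminf sa) auto
      moreover have "L2_set b {..<n} \<le> sqrt ?B" unfolding L2_set_def
        by (intro real_sqrt_le_mono sum_le_suminf sb) auto
      ultimately show ?thesis by (intro power_mono) auto
    qed
    finally show ?thesis .
  qed
  then have "(\<Sum>j. (s j)^2) \<le> (sqrt ?A + sqrt ?B)^2" by (intro suminf_le_const ss)
  then have "sqrt (\<Sum>j. (s j)^2) \<le> sqrt ((sqrt ?A + sqrt ?B)^2)" by (rule real_sqrt_le_mono)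
  also have "\<dots> = sqrt ?A + sqrt ?B"
    using suminf_nonneg[OF sa] suminf_nonneg[OF sb] by simp
  finally show "sqrt (\<Sum>j. (s j)^2) \<le> sqrt ?A + sqrt ?B" .
qed

lemma sc_series:
  fixes a b s :: "nat \<Rightarrow> real"
  assumes s0: "\<And>j. 0 \<le> s j" and sab: "\<And>j. s j \<le> a j + b j" and a0: "\<And>j. 0 \<le> a j" and b0: "\<And>j. 0 \<le> b j"
    and sa: "summable (\<lambda>j. (a j)^2)" and sb: "summable (\<lambda>j. (b j)^2)" and ss: "summable (\<lambda>j. (s j)^2)"
    and e1: "sqrt (\<Sum>j. (a j)^2) = sqrt (\<Sum>j. (b j)^2)"
    and e2: "sqrt (\<Sum>j. (b j)^2) = 1/2 * sqrt (\<Sum>j. (s j)^2)"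
  shows "a j = b j \<and> s j = a j + b j"
proof -
  let ?A = "\<Sum>j. (a j)^2" and ?B = "\<Sum>j. (b j)^2" and ?S = "\<Sum>j. (s j)^2"
  have A0: "?A \<ge> 0" "?B \<ge> 0" "?S \<ge> 0" using sa sb ss by (auto intro: suminf_nonneg)
  have AB: "?A = ?B" using e1 A0 by simp
  have "sqrt ?S = 2 * sqrt ?B" using e2 by simp
  then have "(sqrt ?S)^2 = (2 * sqrt ?B)^2" by simp
  then have SB: "?S = 4 * ?B" using A0 by (simp add: power_mult_distrib)
  have d1: "summable (\<lambda>j. (a j - b j)^2)"
    by (rule summable_comparison_test'[OF summable_add[OF summable_mult[OF sa, of 2] summable_mult[OF sb, of 2]]])
       (simp only: real_norm_def abs_power2 sq_diff_le)
  have sab2: "summable (\<lambda>j. (a j + b j)^2)"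
    by (rule summable_comparison_test'[OF summable_add[OF summable_mult[OF sa, of 2] summable_mult[OF sb, of 2]]])
       (simp only: real_norm_def abs_power2 sq_sum_le)
  have d2: "summable (\<lambda>j. (a j + b j)^2 - (s j)^2)" using sab2 ss by (rule summable_diff)
  have nn1: "0 \<le> (a j - b j)^2" for j by simp
  have nn2: "0 \<le> (a j + b j)^2 - (s j)^2" for j using s0 sab by (simp add: power_mono)
  have "(\<Sum>j. (a j - b j)^2) + (\<Sum>j. (a j + b j)^2 - (s j)^2)
        = (\<Sum>j. (a j - b j)^2 + ((a j + b j)^2 - (s j)^2))" by (rule suminf_add[OF d1 d2])
  also have "\<dots> = (\<Sum>j. 2 * (a j)^2 + 2 * (b j)^2 - (s j)^2)"
    by (rule arg_cong[where f=suminf]) (auto simp: power2_eq_square algebra_simps)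
  also have "\<dots> = 2 * ?A + 2 * ?B - ?S"
    using suminf_diff[OF summable_add[OF summable_mult[OF sa, of 2] summable_mult[OF sb, of 2]] ss]
      suminf_add[OF summable_mult[OF sa, of 2] summable_mult[OF sb, of 2]]
      suminf_mult[OF sa, of 2] suminf_mult[OF sb, of 2] by simp
  also have "\<dots> = 0" using AB SB by simp
  finally have tot: "(\<Sum>j. (a j - b j)^2) + (\<Sum>j. (a j + b j)^2 - (s j)^2) = 0" .
  have p1: "(\<Sum>j. (a j - b j)^2) \<ge> 0" using d1 nn1 by (rule suminf_nonneg)
  have p2: "(\<Sum>j. (a j + b j)^2 - (s j)^2) \<ge> 0" using d2 nn2 by (rule suminf_nonneg)
  have z1: "(\<Sum>j. (a j - b j)^2) = 0" and z2: "(\<Sum>j. (a j + b j)^2 - (s j)^2) = 0"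
    using tot p1 p2 by linarith+
  have "(a j - b j)^2 = 0" using z1 suminf_eq_zero_iff[OF d1 nn1] by blast
  then have ab: "a j = b j" by simp
  have "(a j + b j)^2 - (s j)^2 = 0" using z2 suminf_eq_zero_iff[OF d2 nn2] by blast
  then have "(s j)^2 = (a j + b j)^2" by simp
  then have "s j = a j + b j" using s0[of j] a0[of j] b0[of j] by (simp add: power2_eq_iff_nonneg)
  with ab show ?thesis by simp
qed

definition bddf :: "('a \<Rightarrow> real) \<Rightarrow> bool" where
  "bddf f \<longleftrightarrow> (\<exists>B. \<forall>x. \<bar>f x\<bar> \<le> B)"

lemma sup_ub: "bddf f \<Longrightarrow> \<bar>f x\<bar> \<le> supnorm f"
  unfolding supnorm_def bddf_def by (rule cSUP_upper) (auto simp: bdd_above_def)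

lemma sup_least: "(\<And>x. \<bar>f x\<bar> \<le> B) \<Longrightarrow> supnorm f \<le> B"
  unfolding supnorm_def by (rule cSUP_least) auto

lemma sup_nonneg: "bddf f \<Longrightarrow> 0 \<le> supnorm f"
  using sup_ub[of f undefined] by linarith

lemma sup_zero: "supnorm (\<lambda>x. 0) = 0"
  unfolding supnorm_def by simp

lemma bddf_add: "bddf f \<Longrightarrow> bddf g \<Longrightarrow> bddf (\<lambda>x. f x + g x)"
  unfolding bddf_def by (metis abs_triangle_ineq add_mono order_trans)

lemma sup_triangle: "bddf f \<Longrightarrow> bddf g \<Longrightarrow> supnorm (\<lambda>x. f x + g x) \<le> supnorm f + supnorm g"
  by (rule sup_least) (metis abs_triangle_ineq add_mono order_trans sup_ub)

lemma sup_scale: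
  assumes "bddf f"
  shows "supnorm (\<lambda>x. c * f x) = \<bar>c\<bar> * supnorm f"
proof (rule antisym)
  show "supnorm (\<lambda>x. c * f x) \<le> \<bar>c\<bar> * supnorm f"
    by (rule sup_least) (simp add: abs_mult mult_left_mono sup_ub[OF assms])
  have bc: "bddf (\<lambda>x. c * f x)" using assms unfolding bddf_def
    by (metis abs_ge_zero abs_mult mult_left_mono)
  show "\<bar>c\<bar> * supnorm f \<le> supnorm (\<lambda>x. c * f x)"
  proof (cases "c = 0")
    case True then show ?thesis using sup_nonneg[OF bc] by simp
  next
    case False
    have "supnorm f \<le> supnorm (\<lambda>x. c * f x) / \<bar>c\<bar>"
    proof (rule sup_least)
      fix x
      have "\<bar>c * f x\<bar> \<le> supnorm (\<lambda>x. c * f x)" using sup_ub[OF bc] by simp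
      then show "\<bar>f x\<bar> \<le> supnorm (\<lambda>x. c * f x) / \<bar>c\<bar>" using False by (simp add: abs_mult field_simps)
    qed
    then show ?thesis using False by (simp add: field_simps)
  qed
qed

lemma C0_cont: "f \<in> C0_tree \<Longrightarrow> continuous_map tree_topology euclideanreal f"
  by (simp add: C0_tree_def)

lemma C0_cpt: "f \<in> C0_tree \<Longrightarrow> e > 0 \<Longrightarrow> compactin tree_topology {x. \<bar>f x\<bar> \<ge> e}"
  by (simp add: C0_tree_def)

lemma C0_bdd:
  assumes "f \<in> C0_tree"
  shows "bddf f"
proof -
  have "compactin euclideanreal (f ` {x. \<bar>f x\<bar> \<ge> 1})"
    using image_compactin[OF C0_cpt[OF assms, of 1] C0_cont[OF assms]] by simp
  then have "bounded (f ` {x. \<bar>f x\<bar> \<ge> 1})" by (simp add: compact_imp_bounded)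
  then obtain a where a: "\<forall>y\<in>f ` {x. \<bar>f x\<bar> \<ge> 1}. norm y \<le> a" by (auto simp: bounded_iff)
  have "\<bar>f x\<bar> \<le> max 1 a" for x
  proof (cases "\<bar>f x\<bar> \<ge> 1")
    case True then show ?thesis using a by fastforce
  next
    case False then show ?thesis by simp
  qed
  then show ?thesis unfolding bddf_def by blast
qed

context rtree
begin

lemma TT_c0:
  assumes f: "f \<in> C0_tree"
  shows "TT f \<in> c0_fun"
  unfolding c0_fun_def
proof (intro CollectI allI impI)
  fix e :: real assume e: "e > 0"
  let ?S = "supnorm f"
  have bf: "bddf f" by (rule C0_bdd[OF f])
  obtain N where N: "(1/2::real)^N < e / (?S + 1)"
    using real_arch_pow_inv[of "e / (?S + 1)" "1/2"] e sup_nonneg[OF bf] by auto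
  have sub: "{x. \<bar>TT f x\<bar> \<ge> e} \<subseteq> (\<Union>n\<in>{..N}. {x. \<bar>f x\<bar> \<ge> e} \<inter> {t. PP t n})"
  proof
    fix x assume "x \<in> {x. \<bar>TT f x\<bar> \<ge> e}"
    then have ex: "e \<le> ww x * \<bar>f x\<bar>" using ww_bounds[of x] by (simp add: TT_def abs_mult)
    have fx: "\<bar>f x\<bar> \<le> ?S" by (rule sup_ub[OF bf])
    have "ww x * \<bar>f x\<bar> \<le> ww x * (?S + 1)" by (rule mult_left_mono) (use fx ww_bounds[of x] in auto)
    then have "e \<le> ww x * (?S + 1)" using ex by linarith
    then have "e / (?S + 1) \<le> ww x" using sup_nonneg[OF bf] by (simp add: field_simps)
    then have "(1/2)^N \<le> ww x" using N by linarith
    then obtain n where "n \<le> N" "PP x n" using ww_large by blast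
    moreover have "ww x * \<bar>f x\<bar> \<le> \<bar>f x\<bar>" by (rule mult_left_le_one_le) (use ww_bounds[of x] in auto)
    then have "\<bar>f x\<bar> \<ge> e" using ex by linarith
    ultimately show "x \<in> (\<Union>n\<in>{..N}. {x. \<bar>f x\<bar> \<ge> e} \<inter> {t. PP t n})" by auto
  qed
  have "finite (\<Union>n\<in>{..N}. {x. \<bar>f x\<bar> \<ge> e} \<inter> {t. PP t n})"
  proof (rule finite_UN_I)
    fix n
    show "finite ({x. \<bar>f x\<bar> \<ge> e} \<inter> {t. PP t n})"
      by (rule antichain_compact_finite[OF C0_cpt[OF f e]]) (use PP_antichain in auto)
  qed simp
  then show "finite {x. \<bar>TT f x\<bar> \<ge> e}" using sub by (rule finite_subset[rotated])
qed

lemma TT_abs: "f \<in> C0_tree \<Longrightarrow> \<bar>TT f x\<bar> \<le> supnorm f"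
proof -
  assume f: "f \<in> C0_tree"
  have "\<bar>TT f x\<bar> = ww x * \<bar>f x\<bar>" using ww_bounds[of x] by (simp add: TT_def abs_mult)
  also have "\<dots> \<le> \<bar>f x\<bar>" using ww_bounds[of x] by (simp add: mult_left_le_one_le)
  also have "\<dots> \<le> supnorm f" by (rule sup_ub[OF C0_bdd[OF f]])
  finally show ?thesis .
qed

lemma TT_inj:
  assumes f: "f \<in> C0_tree" and g: "g \<in> C0_tree" and eq: "TT f = TT g"
  shows "f = g"
proof
  fix t
  let ?h = "\<lambda>x. f x - g x"
  have hc: "continuous_map tree_topology euclideanreal ?h"
    by (intro continuous_map_diff C0_cont f g)
  have "?h t = 0"
  proof (rule vanish[OF hc])
    fix s assume "\<exists>n. PP s n"
    then have "ww s \<noteq> 0" using ww_nz by blast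
    moreover have "ww s * f s = ww s * g s" using eq unfolding TT_def by meson
    ultimately show "f s - g s = 0" by simp
  qed
  then show "f t = g t" by simp
qed

definition PN :: "('a \<Rightarrow> real) \<Rightarrow> nat \<Rightarrow> real" where
  "PN f j = (if j = 0 then supnorm f else QQ j (TT f))"

definition NN :: "('a \<Rightarrow> real) \<Rightarrow> real" where
  "NN f = sqrt (\<Sum>j. ((1/2)^j * PN f j)^2)"

lemma PN_nonneg: "f \<in> C0_tree \<Longrightarrow> 0 \<le> PN f j"
  unfolding PN_def using sup_nonneg[OF C0_bdd] QQ_nonneg[OF TT_c0] by auto

lemma term_bound:
  assumes f: "f \<in> C0_tree"
  shows "((1/2)^j * PN f j)^2 \<le> (1/2)^j * (supnorm f)^2"
proof -
  let ?S = "supnorm f"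
  have P2: "(PN f j)^2 \<le> real (j+1) * ?S^2"
  proof (cases "j = 0")
    case True then show ?thesis by (simp add: PN_def)
  next
    case False
    have "(PN f j)^2 \<le> real j * ?S^2" using False QQ_bound[OF TT_c0[OF f] TT_abs[OF f]] by (simp add: PN_def)
    also have "\<dots> \<le> real (j+1) * ?S^2" by (intro mult_right_mono) auto
    finally show ?thesis .
  qed
  have jj: "real (j+1) \<le> 2^j"
  proof -
    have "j + 1 \<le> (2::nat)^j" using less_exp[of j] by (simp add: Suc_le_eq)
    then have "real (j+1) \<le> real ((2::nat)^j)" by (rule of_nat_mono)
    then show ?thesis by simp
  qed
  have "((1/2)^j * PN f j)^2 = (1/2)^j * (1/2)^j * (PN f j)^2" by (simp add: power_mult_distrib power2_eq_square)
  also have "\<dots> \<le> (1/2)^j * (1/2)^j * (real (j+1) * ?S^2)" by (intro mult_left_mono P2) auto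
  also have "\<dots> \<le> (1/2)^j * (1/2)^j * (2^j * ?S^2)" by (intro mult_left_mono mult_right_mono jj) auto
  also have "\<dots> = (1/2)^j * ?S^2" by (simp add: power_one_over field_simps)
  finally show ?thesis .
qed

lemma NN_summable:
  assumes f: "f \<in> C0_tree"
  shows "summable (\<lambda>j. ((1/2)^j * PN f j)^2)"
proof -
  have g: "summable (\<lambda>j. (1/2::real)^j * (supnorm f)^2)"
    by (rule summable_mult2) (rule summable_geometric, simp)
  show ?thesis by (rule summable_comparison_test'[OF g]) (simp only: real_norm_def abs_power2 term_bound[OF f])
qed

lemma NN_upper:
  assumes f: "f \<in> C0_tree"
  shows "NN f \<le> 2 * supnorm f"
proof -
  let ?S = "supnorm f"
  have "(\<Sum>j. ((1/2)^j * PN f j)^2) \<le> (\<Sum>j. (1/2::real)^j * ?S^2)"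
    by (rule suminf_le[OF term_bound[OF f] NN_summable[OF f] summable_mult2[OF summable_geometric]]) simp
  also have "\<dots> = 2 * ?S^2" using suminf_mult2[OF summable_geometric[of "1/2::real"], of "?S^2"] suminf_geometric[of "1/2::real"] by simp
  also have "\<dots> \<le> (2 * ?S)^2" by (simp add: power_mult_distrib)
  finally have "NN f \<le> sqrt ((2 * ?S)^2)" unfolding NN_def by (rule real_sqrt_le_mono)
  then show ?thesis using sup_nonneg[OF C0_bdd[OF f]] real_sqrt_abs[of "2 * supnorm f"] by simp
qed

lemma NN_lower:
  assumes f: "f \<in> C0_tree"
  shows "supnorm f \<le> NN f"
proof -
  have "(\<Sum>j\<in>{0}. ((1/2)^j * PN f j)^2) \<le> (\<Sum>j. ((1/2)^j * PN f j)^2)"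
    by (rule sum_le_suminf[OF NN_summable[OF f]]) auto
  then have "(supnorm f)^2 \<le> (\<Sum>j. ((1/2)^j * PN f j)^2)" by (simp add: PN_def)
  then have "sqrt ((supnorm f)^2) \<le> NN f" unfolding NN_def by (rule real_sqrt_le_mono)
  then show ?thesis using sup_nonneg[OF C0_bdd[OF f]] by simp
qed

lemma NN_nonneg: "f \<in> C0_tree \<Longrightarrow> 0 \<le> NN f"
  using NN_lower sup_nonneg[OF C0_bdd] by (meson order_trans)

lemma TT_add: "TT (\<lambda>x. f x + g x) = (\<lambda>x. TT f x + TT g x)"
  by (simp add: TT_def algebra_simps)

lemma TT_scale: "TT (\<lambda>x. c * f x) = (\<lambda>x. c * TT f x)"
  by (simp add: TT_def algebra_simps)

lemma PN_scale: "f \<in> C0_tree \<Longrightarrow> PN (\<lambda>x. c * f x) j = \<bar>c\<bar> * PN f j"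
  unfolding PN_def TT_scale using sup_scale[OF C0_bdd] QQ_scale[OF TT_c0] by auto

lemma PN_add:
  assumes "f \<in> C0_tree" "g \<in> C0_tree"
  shows "PN (\<lambda>x. f x + g x) j \<le> PN f j + PN g j" "0 \<le> PN (\<lambda>x. f x + g x) j"
proof -
  show "PN (\<lambda>x. f x + g x) j \<le> PN f j + PN g j"
    unfolding PN_def TT_add
    using sup_triangle[OF C0_bdd[OF assms(1)] C0_bdd[OF assms(2)]] QQ_triangle[OF TT_c0[OF assms(1)] TT_c0[OF assms(2)]]
    by auto
  show "0 \<le> PN (\<lambda>x. f x + g x) j"
    unfolding PN_def TT_add
    using sup_nonneg[OF bddf_add[OF C0_bdd[OF assms(1)] C0_bdd[OF assms(2)]]] QQ_nonneg[OF c0_add[OF TT_c0[OF assms(1)] TT_c0[OF assms(2)]]]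
    by auto
qed

lemma NN_scale:
  assumes f: "f \<in> C0_tree"
  shows "NN (\<lambda>x. c * f x) = \<bar>c\<bar> * NN f"
proof -
  have "(\<lambda>j. ((1/2)^j * PN (\<lambda>x. c * f x) j)^2) = (\<lambda>j. c^2 * ((1/2)^j * PN f j)^2)"
    by (simp add: PN_scale[OF f] power_mult_distrib algebra_simps)
  then have "(\<Sum>j. ((1/2)^j * PN (\<lambda>x. c * f x) j)^2) = c^2 * (\<Sum>j. ((1/2)^j * PN f j)^2)"
    using suminf_mult[OF NN_summable[OF f], of "c^2"] by simp
  then show ?thesis unfolding NN_def by (simp add: real_sqrt_mult)
qed

lemma NN_triangle:
  assumes f: "f \<in> C0_tree" and g: "g \<in> C0_tree"
  shows "NN (\<lambda>x. f x + g x) \<le> NN f + NN g"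
  unfolding NN_def
  by (rule mink(2)) (use PN_add[OF f g] PN_nonneg[OF f] PN_nonneg[OF g] NN_summable[OF f] NN_summable[OF g]
      in \<open>auto simp: distrib_left[symmetric] intro: mult_left_mono\<close>)

lemma NN_strict:
  assumes f: "f \<in> C0_tree" and g: "g \<in> C0_tree"
    and e1: "NN f = NN g" and e2: "NN g = 1/2 * NN (\<lambda>x. f x + g x)"
  shows "f = g"
proof -
  let ?a = "\<lambda>j. (1/2::real)^j * PN f j" and ?b = "\<lambda>j. (1/2::real)^j * PN g j"
    and ?s = "\<lambda>j. (1/2::real)^j * PN (\<lambda>x. f x + g x) j"
  have s0: "\<And>j. 0 \<le> ?s j" using PN_add(2)[OF f g] by simp
  have sab: "\<And>j. ?s j \<le> ?a j + ?b j" using PN_add(1)[OF f g] by (simp add: distrib_left[symmetric] mult_left_mono)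
  have a0: "\<And>j. 0 \<le> ?a j" using PN_nonneg[OF f] by simp
  have b0: "\<And>j. 0 \<le> ?b j" using PN_nonneg[OF g] by simp
  have ss: "summable (\<lambda>j. (?s j)^2)" by (rule mink(1)[OF s0 sab a0 b0 NN_summable[OF f] NN_summable[OF g]])
  have res: "?a j = ?b j \<and> ?s j = ?a j + ?b j" for j
    by (rule sc_series[OF s0 sab a0 b0 NN_summable[OF f] NN_summable[OF g] ss])
       (use e1 e2 in \<open>simp_all add: NN_def\<close>)
  have r1: "PN f j = PN g j" for j using res[of j] by simp
  have r2: "PN (\<lambda>x. f x + g x) j = PN f j + PN g j" for j using res[of j] by (simp add: distrib_left[symmetric])
  have "TT f = TT g"
  proof (rule key[OF TT_c0[OF f] TT_c0[OF g]])
    fix k :: nat assume "k > 0"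
    show "QQ k (TT f) = QQ k (TT g)" using r1[of k] \<open>k > 0\<close> by (simp add: PN_def)
    show "QQ k (\<lambda>x. TT f x + TT g x) = QQ k (TT f) + QQ k (TT g)"
      using r2[of k] \<open>k > 0\<close> by (simp add: PN_def TT_add)
  qed
  then show ?thesis by (rule TT_inj[OF f g])
qed

end

theorem proposition2p7:
  assumes "is_tree TYPE('a::order)"
    and "R_embeddable TYPE('a)"
  shows "(\<exists>T :: ('a \<Rightarrow> real) \<Rightarrow> ('a \<Rightarrow> real).
            bounded_linear_injection_on C0_tree c0_fun T)
       \<and> (\<exists>N. norm_on (C0_tree :: ('a \<Rightarrow> real) set) N
              \<and> equivalent_to_supnorm_on C0_tree N \<and> strictly_convex_on C0_tree N)"
proof -
  have wo: "tree_wellordered TYPE('a)" and hd: "tree_hausdorff TYPE('a)"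
    using assms(1) unfolding is_tree_def by auto
  obtain \<rho> :: "'a \<Rightarrow> real" where \<rho>: "\<forall>s t. s < t \<longrightarrow> \<rho> s < \<rho> t"
    using assms(2) unfolding R_embeddable_def by blast
  interpret R: rtree \<rho> using wo hd \<rho> by unfold_locales auto
  have i1: "\<forall>f\<in>C0_tree. R.TT f \<in> c0_fun" using R.TT_c0 by blast
  have i2: "\<forall>f\<in>C0_tree. \<forall>g\<in>C0_tree. \<forall>a b. R.TT (\<lambda>x. a * f x + b * g x) = (\<lambda>y. a * R.TT f y + b * R.TT g y)"
    by (simp add: R.TT_def algebra_simps)
  have i3: "\<exists>M. \<forall>f\<in>C0_tree. supnorm (R.TT f) \<le> M * supnorm f"
    by (intro exI[of _ 1] ballI) (simp add: sup_least R.TT_abs)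
  have i4: "inj_on R.TT C0_tree" by (rule inj_onI) (rule R.TT_inj)
  have part1: "bounded_linear_injection_on C0_tree c0_fun R.TT"
    unfolding bounded_linear_injection_on_def using i1 i2 i3 i4 by blast
  have n1: "\<forall>f\<in>C0_tree. R.NN f \<ge> 0 \<and> (R.NN f = 0 \<longleftrightarrow> f = (\<lambda>x. 0))"
  proof
    fix f :: "'a \<Rightarrow> real" assume f: "f \<in> C0_tree"
    have "R.NN f = 0 \<longleftrightarrow> f = (\<lambda>x. 0)"
    proof
      assume "R.NN f = 0"
      then have S0: "supnorm f \<le> 0" using R.NN_lower[OF f] by simp
      show "f = (\<lambda>x. 0)"
      proof
        fix x show "f x = 0" using sup_ub[OF C0_bdd[OF f], of x] S0 by simp
      qed
    next
      assume "f = (\<lambda>x. 0)"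
      moreover have z: "supnorm (\<lambda>x::'a. 0::real) = 0" by (rule sup_zero)
      ultimately have "R.NN f \<le> 0" using R.NN_upper[OF f] by simp
      then show "R.NN f = 0" using R.NN_nonneg[OF f] by linarith
    qed
    then show "R.NN f \<ge> 0 \<and> (R.NN f = 0 \<longleftrightarrow> f = (\<lambda>x. 0))" using R.NN_nonneg[OF f] by simp
  qed
  have n2: "\<forall>f\<in>C0_tree. \<forall>c. R.NN (\<lambda>x. c * f x) = \<bar>c\<bar> * R.NN f" using R.NN_scale by blast
  have n3: "\<forall>f\<in>C0_tree. \<forall>g\<in>C0_tree. R.NN (\<lambda>x. f x + g x) \<le> R.NN f + R.NN g" using R.NN_triangle by blast
  have part2: "norm_on C0_tree R.NN" unfolding norm_on_def using n1 n2 n3 by blast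
  have part3: "equivalent_to_supnorm_on C0_tree R.NN"
    unfolding equivalent_to_supnorm_on_def
    by (rule exI[of _ 1], rule exI[of _ 2]) (simp add: R.NN_lower R.NN_upper)
  have part4: "strictly_convex_on C0_tree R.NN"
    unfolding strictly_convex_on_def using R.NN_strict by blast
  show ?thesis using part1 part2 part3 part4 by blast
qed

end
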